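(* The MPB rule $M$ satisfies: (a) splitting monotonicity: for every instance $I$ and every $p\in W_M(I)$, if $I'$ is obtained from $I$ by replacing $p$ with a set $P'$ of new projects with $c(P')=c(p)$ and replacing every $A_i$ containing $p$ by $(A_i\setminus\{p\})\cup P'$, then $W_M(I')\cap P'\ne\emptyset$; (b) merging monotonicity: for every instance $I$, every $S\in M(I)$ and every $P'\subseteq S$ with $A_i\cap P'\in\{P',\emptyset\}$ for every voter $i$, if $I'$ is obtained from $I$ by merging the projects of $P'$ into a single new project $p$ with cost $c(P')$ and replacing every $A_i$ containing $P'$ by $(A_i\setminus P')\cup\{p\}$, then $p\in W_M(I')$; (c) weak exhaustiveness: for every instance $I$, every $S\in M(I)$ and every $p\in P\setminus S$ with $c(S)+c(p)\le b$, we have $S\cup\{p\}\in M(I)$.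
   Context: A PB instance is $I=\langle N,P,c,b,\mathcal{A}\rangle$ with voters $N=\{1,\dots,n\}$, projects $P$, costs $c:P\to\mathbb{N}$, budget $b\in\mathbb{N}$, and approval sets $A_i\subseteq P$. $c(S)=\sum_{p\in S}c(p)$; $S$ is feasible if $c(S)\le b$; $u_i(S)=c(S\cap A_i)$. A PB rule $R$ maps each instance to a set $R(I)$ of feasible subsets of $P$. The MPB rule $M$ outputs $M(I)$, the set of all feasible $S$ maximizing $\min_{i\in N}u_i(S)$ among feasible sets. For a rule $R$, $W_R(I)=\{p\in P:\exists S\in R(I),\ p\in S\}$ is the set of winning projects. *)

theory Defs
  imports Main
begin

definition pb_instance :: "nat \<Rightarrow> 'a set \<Rightarrow> ('a \<Rightarrow> nat) \<Rightarrow> nat \<Rightarrow> (nat \<Rightarrow> 'a set) \<Rightarrow> bool" where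
  "pb_instance n P c b A \<longleftrightarrow> finite P \<and> (\<forall>i\<in>{1..n}. A i \<subseteq> P)"

definition cost :: "('a \<Rightarrow> nat) \<Rightarrow> 'a set \<Rightarrow> nat" where
  "cost c S = (\<Sum>p\<in>S. c p)"

definition feasible :: "'a set \<Rightarrow> ('a \<Rightarrow> nat) \<Rightarrow> nat \<Rightarrow> 'a set \<Rightarrow> bool" where
  "feasible P c b S \<longleftrightarrow> S \<subseteq> P \<and> cost c S \<le> b"

definition util :: "('a \<Rightarrow> nat) \<Rightarrow> (nat \<Rightarrow> 'a set) \<Rightarrow> nat \<Rightarrow> 'a set \<Rightarrow> nat" where
  "util c A i S = cost c (S \<inter> A i)"

definition min_util :: "nat \<Rightarrow> ('a \<Rightarrow> nat) \<Rightarrow> (nat \<Rightarrow> 'a set) \<Rightarrow> 'a set \<Rightarrow> nat" where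
  "min_util n c A S = Min ((\<lambda>i. util c A i S) ` {1..n})"

definition MPB :: "nat \<Rightarrow> 'a set \<Rightarrow> ('a \<Rightarrow> nat) \<Rightarrow> nat \<Rightarrow> (nat \<Rightarrow> 'a set) \<Rightarrow> 'a set set" where
  "MPB n P c b A = {S. feasible P c b S \<and>
      (\<forall>T. feasible P c b T \<longrightarrow> min_util n c A T \<le> min_util n c A S)}"

definition winners :: "'a set set \<Rightarrow> 'a set" where
  "winners R = {p. \<exists>S\<in>R. p \<in> S}"

end

theory Submission
  imports Defs
begin

lemma min_util_eq:
  assumes "\<forall>i\<in>{1..n}. util c A i S = util c' A' i T"
  shows "min_util n c A S = min_util n c' A' T"
  unfolding min_util_def using assms by (intro arg_cong[where f=Min] image_cong) auto

lemma min_util_mono: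
  assumes "\<forall>i\<in>{1..n}. util c A i S \<le> util c A i T"
  shows "min_util n c A S \<le> min_util n c A T"
proof (cases "n = 0")
  case True then show ?thesis by (simp add: min_util_def)
next
  case False
  let ?I = "{1..n}"
  have ne: "?I \<noteq> {}" using False by auto
  have "Min ((\<lambda>i. util c A i T) ` ?I) \<in> (\<lambda>i. util c A i T) ` ?I"
    using ne by (intro Min_in) auto
  then obtain j where j: "j \<in> ?I" "Min ((\<lambda>i. util c A i T) ` ?I) = util c A j T" by auto
  have "Min ((\<lambda>i. util c A i S) ` ?I) \<le> util c A j S" using j by (intro Min_le) auto
  also have "\<dots> \<le> util c A j T" using assms j by auto
  finally show ?thesis unfolding min_util_def using j by simp
qed

lemma cost_cong: "(\<And>x. x \<in> X \<Longrightarrow> c x = c' x) \<Longrightarrow> cost c X = cost c' X"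
  unfolding cost_def by (rule sum.cong) auto

lemma cost_union: "finite X \<Longrightarrow> finite Y \<Longrightarrow> X \<inter> Y = {} \<Longrightarrow> cost c (X \<union> Y) = cost c X + cost c Y"
  unfolding cost_def by (rule sum.union_disjoint)

lemma cost_mono: "finite Y \<Longrightarrow> X \<subseteq> Y \<Longrightarrow> cost c X \<le> cost c Y"
  unfolding cost_def by (rule sum_mono2) auto

lemma part_c:
  assumes inst: "pb_instance n P c b A" and S: "S \<in> MPB n P c b A" and p: "p \<in> P - S"
    and bud: "cost c S + c p \<le> b"
  shows "insert p S \<in> MPB n P c b A"
proof -
  have fP: "finite P" using inst by (simp add: pb_instance_def)
  have SP: "S \<subseteq> P" and opt: "\<forall>T. feasible P c b T \<longrightarrow> min_util n c A T \<le> min_util n c A S"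
    using S by (auto simp: MPB_def feasible_def)
  have fS: "finite S" using finite_subset[OF SP fP] .
  have "cost c (insert p S) = c p + cost c S" using fS p unfolding cost_def by simp
  hence feas: "feasible P c b (insert p S)" using bud SP p by (simp add: feasible_def)
  have "min_util n c A S \<le> min_util n c A (insert p S)"
    apply (rule min_util_mono)
    unfolding util_def using fS by (auto intro: cost_mono)
  then show ?thesis using feas opt unfolding MPB_def by (auto intro: order.trans)
qed

lemma part_b:
  assumes inst: "pb_instance n P c b A" and S: "S \<in> MPB n P c b A" and PS: "P' \<subseteq> S"
    and ag: "\<forall>i\<in>{1..n}. A i \<inter> P' = P' \<or> A i \<inter> P' = {}"
    and pP: "p \<notin> P" and cp: "c' p = cost c P'" and cq: "\<forall>q\<in>P - P'. c' q = c q"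
    and A': "\<forall>i\<in>{1..n}. A' i = (if P' \<subseteq> A i then (A i - P') \<union> {p} else A i)"
  shows "p \<in> winners (MPB n ((P - P') \<union> {p}) c' b A')"
proof -
  define Q where "Q = (P - P') \<union> {p}"
  define bk where "bk T = (if p \<in> T then (T - {p}) \<union> P' else T)" for T
  have fP: "finite P" and AP: "\<forall>i\<in>{1..n}. A i \<subseteq> P" using inst by (auto simp: pb_instance_def)
  have SP: "S \<subseteq> P" and opt: "\<forall>T. feasible P c b T \<longrightarrow> min_util n c A T \<le> min_util n c A S"
    and Sb: "cost c S \<le> b"
    using S by (auto simp: MPB_def feasible_def)
  have fP': "finite P'" using finite_subset[OF PS finite_subset[OF SP fP]] .
  have key: "bk T \<subseteq> P \<and> cost c (bk T) = cost c' T \<and>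
      (\<forall>i\<in>{1..n}. util c A i (bk T) = util c' A' i T)" if TQ: "T \<subseteq> Q" for T
  proof -
    have fT: "finite (T - {p})" using TQ fP unfolding Q_def by (meson finite_Diff finite_Un finite_insert finite.emptyI finite_subset)
    have ag2: "\<And>X. X \<subseteq> P - P' \<Longrightarrow> cost c' X = cost c X" using cq by (intro cost_cong) auto
    have TP: "T - {p} \<subseteq> P - P'" using TQ unfolding Q_def by auto
    show ?thesis
    proof (cases "p \<in> T")
      case True
      have bT: "bk T = (T - {p}) \<union> P'" using True by (simp add: bk_def)
      have c1: "cost c (bk T) = cost c' T"
      proof -
        have "cost c (bk T) = cost c (T - {p}) + cost c P'"
          unfolding bT using TP fT fP' by (intro cost_union) auto
        also have "\<dots> = cost c' (T - {p}) + c' p" using ag2 TP cp by simp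
        also have "\<dots> = cost c' T"
        proof -
          have fT': "finite T" using fT by simp
          show ?thesis unfolding cost_def using sum.remove[OF fT' True, of c'] by simp
        qed
        finally show ?thesis .
      qed
      have u: "util c A i (bk T) = util c' A' i T" if i: "i \<in> {1..n}" for i
      proof (cases "P' \<subseteq> A i")
        case True2: True
        let ?X = "(T - {p}) \<inter> A i"
        have e1: "bk T \<inter> A i = ?X \<union> P'" using True2 unfolding bT by auto
        have e2: "T \<inter> A' i = insert p ?X" using True2 A' i True TP by auto
        have fX: "finite ?X" using fT by simp
        have "cost c (bk T \<inter> A i) = cost c ?X + cost c P'"
          unfolding e1 using fX fP' TP by (intro cost_union) auto
        also have "\<dots> = cost c' ?X + c' p" using ag2[of ?X] TP cp by (metis Int_lower1 order.trans)
        also have "\<dots> = cost c' (T \<inter> A' i)" unfolding e2 cost_def using fX by simp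
        finally show ?thesis unfolding util_def .
      next
        case False2: False
        have d: "A i \<inter> P' = {}" using ag i False2 by auto
        have pA: "p \<notin> A i" using AP i pP by auto
        have e1: "bk T \<inter> A i = (T - {p}) \<inter> A i" using d unfolding bT by auto
        have e2: "T \<inter> A' i = (T - {p}) \<inter> A i" using A' i False2 pA by auto
        show ?thesis unfolding util_def e1 e2 using ag2[of "(T - {p}) \<inter> A i"] TP by (metis Int_lower1 order.trans)
      qed
      show ?thesis using c1 u TP SP PS unfolding bT by auto
    next
      case False
      have bT: "bk T = T" using False by (simp add: bk_def)
      have TP': "T \<subseteq> P - P'" using TP False by auto
      have u: "util c A i T = util c' A' i T" if i: "i \<in> {1..n}" for i
      proof -
        have "T \<inter> A' i = T \<inter> A i" using A' i TP' False by auto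
        then show ?thesis unfolding util_def using ag2[of "T \<inter> A i"] TP' by (metis Int_lower1 order.trans)
      qed
      show ?thesis using bT u ag2[OF TP'] TP' by auto
    qed
  qed
  define S' where "S' = (S - P') \<union> {p}"
  have S'Q: "S' \<subseteq> Q" using SP unfolding S'_def Q_def by auto
  have bS: "bk S' = S" using pP SP PS unfolding bk_def S'_def by auto
  have kS: "cost c S = cost c' S'" "\<forall>i\<in>{1..n}. util c A i S = util c' A' i S'"
    using key[OF S'Q] bS by auto
  have fS': "feasible Q c' b S'" using S'Q kS Sb by (simp add: feasible_def)
  have "min_util n c' A' T \<le> min_util n c' A' S'" if T: "feasible Q c' b T" for T
  proof -
    have TQ: "T \<subseteq> Q" and Tb: "cost c' T \<le> b" using T by (auto simp: feasible_def)
    have k: "bk T \<subseteq> P" "cost c (bk T) = cost c' T" "\<forall>i\<in>{1..n}. util c A i (bk T) = util c' A' i T"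
      using key[OF TQ] by auto
    have "feasible P c b (bk T)" using k Tb by (simp add: feasible_def)
    hence "min_util n c A (bk T) \<le> min_util n c A S" using opt by auto
    moreover have "min_util n c A (bk T) = min_util n c' A' T" using k(3) by (rule min_util_eq)
    moreover have "min_util n c A S = min_util n c' A' S'" using kS(2) by (rule min_util_eq)
    ultimately show ?thesis by simp
  qed
  hence "S' \<in> MPB n Q c' b A'" using fS' unfolding MPB_def by auto
  then show ?thesis unfolding winners_def Q_def S'_def by auto
qed

lemma part_a:
  assumes inst: "pb_instance n P c b A" and pw: "p \<in> winners (MPB n P c b A)"
    and fP': "finite P'" and ne: "P' \<noteq> {}" and dj: "P' \<inter> P = {}"
    and cq: "\<forall>q\<in>P - {p}. c' q = c q" and cP': "cost c' P' = c p"
    and A': "\<forall>i\<in>{1..n}. A' i = (if p \<in> A i then (A i - {p}) \<union> P' else A i)"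
  shows "winners (MPB n ((P - {p}) \<union> P') c' b A') \<inter> P' \<noteq> {}"
proof -
  define Q where "Q = (P - {p}) \<union> P'"
  define fw where "fw X = (if p \<in> X then (X - {p}) \<union> P' else X)" for X
  have fP: "finite P" and AP: "\<forall>i\<in>{1..n}. A i \<subseteq> P" using inst by (auto simp: pb_instance_def)
  obtain S where S: "S \<in> MPB n P c b A" and pS: "p \<in> S" using pw by (auto simp: winners_def)
  have SP: "S \<subseteq> P" and opt: "\<forall>T. feasible P c b T \<longrightarrow> min_util n c A T \<le> min_util n c A S"
    and Sb: "cost c S \<le> b"
    using S by (auto simp: MPB_def feasible_def)
  have pP: "p \<in> P" using pS SP by auto
  have ag2: "\<And>X. X \<subseteq> P - {p} \<Longrightarrow> cost c' X = cost c X" using cq by (intro cost_cong) auto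
  have rem: "cost c Y = cost c (Y - {p}) + c p" if "finite Y" "p \<in> Y" for Y
    unfolding cost_def using sum.remove[OF that, of c] by simp
  have key: "fw X \<subseteq> Q \<and> cost c' (fw X) = cost c X \<and>
      (\<forall>i\<in>{1..n}. util c' A' i (fw X) = util c A i X)" if XP: "X \<subseteq> P" for X
  proof -
    have fX: "finite X" using finite_subset[OF XP fP] .
    show ?thesis
    proof (cases "p \<in> X")
      case True
      have fT: "fw X = (X - {p}) \<union> P'" using True by (simp add: fw_def)
      have XP2: "X - {p} \<subseteq> P - {p}" using XP by auto
      have c1: "cost c' (fw X) = cost c X"
      proof -
        have "cost c' (fw X) = cost c' (X - {p}) + cost c' P'"
          unfolding fT using XP2 fX fP' dj by (intro cost_union) auto
        also have "\<dots> = cost c (X - {p}) + c p" using ag2[OF XP2] cP' by simp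
        also have "\<dots> = cost c X" using rem[OF fX True] by simp
        finally show ?thesis .
      qed
      have u: "util c' A' i (fw X) = util c A i X" if i: "i \<in> {1..n}" for i
      proof (cases "p \<in> A i")
        case True2: True
        let ?Y = "X \<inter> A i"
        have e: "fw X \<inter> A' i = (?Y - {p}) \<union> P'" using True2 A' i unfolding fT by auto
        have fY: "finite ?Y" using fX by simp
        have Y2: "?Y - {p} \<subseteq> P - {p}" using XP by auto
        have "cost c' (fw X \<inter> A' i) = cost c' (?Y - {p}) + cost c' P'"
          unfolding e using fY fP' dj XP by (intro cost_union) auto
        also have "\<dots> = cost c (?Y - {p}) + c p" using ag2[OF Y2] cP' by simp
        also have "\<dots> = cost c ?Y" using rem[OF fY] True True2 by simp
        finally show ?thesis unfolding util_def .
      next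
        case False2: False
        have d: "A i \<inter> P' = {}" using AP i dj by blast
        have e: "fw X \<inter> A' i = X \<inter> A i" using A' i False2 d unfolding fT by auto
        have Y2: "X \<inter> A i \<subseteq> P - {p}" using XP False2 by auto
        show ?thesis unfolding util_def e using ag2[OF Y2] .
      qed
      show ?thesis using c1 u XP unfolding fT Q_def by auto
    next
      case False
      have fT: "fw X = X" using False by (simp add: fw_def)
      have XP2: "X \<subseteq> P - {p}" using XP False by auto
      have u: "util c' A' i X = util c A i X" if i: "i \<in> {1..n}" for i
      proof -
        have "X \<inter> A' i = X \<inter> A i" using A' i XP2 dj by auto
        moreover have "X \<inter> A i \<subseteq> P - {p}" using XP2 by auto
        ultimately show ?thesis unfolding util_def using ag2 by metis
      qed
      show ?thesis using fT u ag2[OF XP2] XP2 unfolding Q_def by auto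
    qed
  qed
  define F where "F = {T. feasible Q c' b T}"
  have fQ: "finite Q" using fP fP' unfolding Q_def by simp
  have fF: "finite F" unfolding F_def feasible_def using fQ
    by (metis (no_types, lifting) Collect_mono PowI finite_Pow_iff finite_subset mem_Collect_eq subsetI)
  have neF: "{} \<in> F" unfolding F_def feasible_def cost_def by simp
  define m where "m = Max (min_util n c' A' ` F)"
  have "m \<in> min_util n c' A' ` F" unfolding m_def using fF neF by (intro Max_in) auto
  then obtain T0 where T0: "T0 \<in> F" "min_util n c' A' T0 = m" by auto
  have T0max: "min_util n c' A' T \<le> m" if "T \<in> F" for T
    unfolding m_def using fF that by (intro Max_ge) auto
  show ?thesis
  proof (cases "T0 \<inter> P' = {}")
    case False
    have "T0 \<in> MPB n Q c' b A'" using T0 T0max unfolding MPB_def F_def by auto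
    then show ?thesis using False unfolding winners_def Q_def by auto
  next
    case True
    have T0Q: "T0 \<subseteq> Q" and T0b: "cost c' T0 \<le> b" using T0 by (auto simp: F_def feasible_def)
    have T0P: "T0 \<subseteq> P" and pT0: "p \<notin> T0" using T0Q True unfolding Q_def by auto
    have fT0: "fw T0 = T0" using pT0 by (simp add: fw_def)
    have k0: "cost c' T0 = cost c T0" "\<forall>i\<in>{1..n}. util c' A' i T0 = util c A i T0"
      using key[OF T0P] fT0 by auto
    have kS: "fw S \<subseteq> Q" "cost c' (fw S) = cost c S" "\<forall>i\<in>{1..n}. util c' A' i (fw S) = util c A i S"
      using key[OF SP] by auto
    have "feasible P c b T0" using T0P T0b k0 by (simp add: feasible_def)
    hence "min_util n c A T0 \<le> min_util n c A S" using opt by auto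
    moreover have "min_util n c' A' T0 = min_util n c A T0" using k0(2) by (rule min_util_eq)
    moreover have "min_util n c' A' (fw S) = min_util n c A S" using kS(3) by (rule min_util_eq)
    ultimately have le: "m \<le> min_util n c' A' (fw S)" using T0 by simp
    have fS: "fw S \<in> F" using kS Sb unfolding F_def feasible_def by simp
    have "fw S \<in> MPB n Q c' b A'" using fS le T0max unfolding MPB_def F_def
      by (auto intro: order.trans)
    moreover have "fw S \<inter> P' = P'" using pS unfolding fw_def by auto
    ultimately show ?thesis using ne unfolding winners_def Q_def by auto
  qed
qed

theorem theorem6:
  shows
  \<comment> \<open>(a) splitting monotonicity\<close>
  "(\<forall>(n::nat) (P::'a set) c b A p P' c' A'.
      pb_instance n P c b A \<and> p \<in> winners (MPB n P c b A) \<and>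
      finite P' \<and> P' \<noteq> {} \<and> P' \<inter> P = {} \<and>
      (\<forall>q\<in>P - {p}. c' q = c q) \<and> cost c' P' = c p \<and>
      (\<forall>i\<in>{1..n}. A' i = (if p \<in> A i then (A i - {p}) \<union> P' else A i))
      \<longrightarrow> winners (MPB n ((P - {p}) \<union> P') c' b A') \<inter> P' \<noteq> {})
   \<and>
  \<comment> \<open>(b) merging monotonicity\<close>
   (\<forall>(n::nat) (P::'a set) c b A S P' p c' A'.
      pb_instance n P c b A \<and> S \<in> MPB n P c b A \<and> P' \<subseteq> S \<and>
      (\<forall>i\<in>{1..n}. A i \<inter> P' = P' \<or> A i \<inter> P' = {}) \<and>
      p \<notin> P \<and> c' p = cost c P' \<and> (\<forall>q\<in>P - P'. c' q = c q) \<and>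
      (\<forall>i\<in>{1..n}. A' i = (if P' \<subseteq> A i then (A i - P') \<union> {p} else A i))
      \<longrightarrow> p \<in> winners (MPB n ((P - P') \<union> {p}) c' b A'))
   \<and>
  \<comment> \<open>(c) weak exhaustiveness\<close>
   (\<forall>(n::nat) (P::'a set) c b A S p.
      pb_instance n P c b A \<and> S \<in> MPB n P c b A \<and> p \<in> P - S \<and>
      cost c S + c p \<le> b
      \<longrightarrow> insert p S \<in> MPB n P c b A)"
proof (intro conjI allI impI)
  fix n :: nat and P :: "'a set" and c b A p P' c' A'
  assume h: "pb_instance n P c b A \<and> p \<in> winners (MPB n P c b A) \<and>
      finite P' \<and> P' \<noteq> {} \<and> P' \<inter> P = {} \<and>
      (\<forall>q\<in>P - {p}. c' q = c q) \<and> cost c' P' = c p \<and>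
      (\<forall>i\<in>{1..n}. A' i = (if p \<in> A i then (A i - {p}) \<union> P' else A i))"
  show "winners (MPB n ((P - {p}) \<union> P') c' b A') \<inter> P' \<noteq> {}"
    using h by (intro part_a[of n P c b A p]) auto
next
  fix n :: nat and P :: "'a set" and c b A S P' p c' A'
  assume h: "pb_instance n P c b A \<and> S \<in> MPB n P c b A \<and> P' \<subseteq> S \<and>
      (\<forall>i\<in>{1..n}. A i \<inter> P' = P' \<or> A i \<inter> P' = {}) \<and>
      p \<notin> P \<and> c' p = cost c P' \<and> (\<forall>q\<in>P - P'. c' q = c q) \<and>
      (\<forall>i\<in>{1..n}. A' i = (if P' \<subseteq> A i then (A i - P') \<union> {p} else A i))"
  show "p \<in> winners (MPB n ((P - P') \<union> {p}) c' b A')"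
    using h by (intro part_b[of n P c b A S]) auto
next
  fix n :: nat and P :: "'a set" and c b A S p
  assume h: "pb_instance n P c b A \<and> S \<in> MPB n P c b A \<and> p \<in> P - S \<and> cost c S + c p \<le> b"
  show "insert p S \<in> MPB n P c b A" using h by (intro part_c) auto
qed

end
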